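(* Let $F$ be a finite field of characteristic $3$. Let $k\ge 0$ be an integer, $m=3k+1$, and $t$ an integer with $t^3\equiv 1\pmod m$ and $\gcd(m,t-1)=1$. Let $G=T_{3m}=\langle x,y\mid x^m=y^3=1,\ y^{-1}xy=x^t\rangle$ (of order $3m$), $FG$ its group algebra, and $H=\langle x\rangle$. Let $\mathcal{C}_1,\dots,\mathcal{C}_k$ be the conjugacy classes of $G$ contained in $\langle x\rangle\setminus\{1\}$ (there are exactly $k$ of them, each of the form $\{x^j,x^{jt},x^{jt^2}\}$), and let $\hat{\mathcal{C}}_i=\sum_{g\in\mathcal{C}_i}g\in FG$. Then $Z(\Delta(G,H))$ equals the $F$-linear span of $\hat{\mathcal{C}}_1,\dots,\hat{\mathcal{C}}_k$.
   Context: $\Delta(G,H)$ is the ideal of $FG$ generated by $\{h-1\mid h\in H\}$; $Z(R)$ denotes the center of a ring $R$. *)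

theory Defs
  imports "HOL-Number_Theory.Cong"
begin

text \<open>The element y^b x^a (0 <= a < m, 0 <= b < 3) is encoded as the pair (a, b).
  Since y^{-1} x y = x^t we have x^a y^d = y^d x^(a t^d), hence
  (y^b x^a)(y^d x^c) = y^(b+d) x^(a t^d + c).\<close>

definition T_carrier :: "int \<Rightarrow> (int \<times> int) set" where
  "T_carrier m = {0..<m} \<times> {0..<3}"

definition T_mult :: "int \<Rightarrow> int \<Rightarrow> int \<times> int \<Rightarrow> int \<times> int \<Rightarrow> int \<times> int" where
  "T_mult m t p q = ((fst p * t ^ nat (snd q) + fst q) mod m, (snd p + snd q) mod 3)"

definition T_one :: "int \<times> int" where
  "T_one = (0, 0)"

definition T_x :: "int \<Rightarrow> int \<times> int" where
  "T_x m = (1 mod m, 0)"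

definition T_y :: "int \<times> int" where
  "T_y = (0, 1)"

definition T_H :: "int \<Rightarrow> int \<Rightarrow> (int \<times> int) set" where
  "T_H m t = range (\<lambda>n::nat. (T_mult m t (T_x m) ^^ n) T_one)"

text \<open>Elements of FG: functions G -> F vanishing outside the carrier.\<close>
definition grp_alg :: "'g set \<Rightarrow> ('g \<Rightarrow> 'a::zero) set" where
  "grp_alg S = {f. \<forall>z. z \<notin> S \<longrightarrow> f z = 0}"

definition ga_mult :: "'g set \<Rightarrow> ('g \<Rightarrow> 'g \<Rightarrow> 'g) \<Rightarrow> ('g \<Rightarrow> 'a::comm_ring_1) \<Rightarrow> ('g \<Rightarrow> 'a) \<Rightarrow> ('g \<Rightarrow> 'a)" where
  "ga_mult S gmult f g = (\<lambda>z. \<Sum>p\<in>S \<times> S. if gmult (fst p) (snd p) = z then f (fst p) * g (snd p) else 0)"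

definition ga_elem :: "'g \<Rightarrow> ('g \<Rightarrow> 'a::comm_ring_1)" where
  "ga_elem g = (\<lambda>z. if z = g then 1 else 0)"

text \<open>Delta(G,H): the (two-sided) ideal of FG generated by {h - 1 | h in H}.\<close>
inductive_set Delta :: "'g set \<Rightarrow> ('g \<Rightarrow> 'g \<Rightarrow> 'g) \<Rightarrow> 'g \<Rightarrow> 'g set \<Rightarrow> ('g \<Rightarrow> 'a::comm_ring_1) set"
  for S gmult one H where
  gen: "h \<in> H \<Longrightarrow> (\<lambda>z. ga_elem h z - ga_elem one z) \<in> Delta S gmult one H"
| zero: "(\<lambda>z. 0) \<in> Delta S gmult one H"
| add: "u \<in> Delta S gmult one H \<Longrightarrow> v \<in> Delta S gmult one H \<Longrightarrow> (\<lambda>z. u z + v z) \<in> Delta S gmult one H"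
| lmult: "a \<in> grp_alg S \<Longrightarrow> u \<in> Delta S gmult one H \<Longrightarrow> ga_mult S gmult a u \<in> Delta S gmult one H"
| rmult: "a \<in> grp_alg S \<Longrightarrow> u \<in> Delta S gmult one H \<Longrightarrow> ga_mult S gmult u a \<in> Delta S gmult one H"

definition ga_center :: "'g set \<Rightarrow> ('g \<Rightarrow> 'g \<Rightarrow> 'g) \<Rightarrow> ('g \<Rightarrow> 'a::comm_ring_1) set \<Rightarrow> ('g \<Rightarrow> 'a) set" where
  "ga_center S gmult R = {z \<in> R. \<forall>r \<in> R. ga_mult S gmult z r = ga_mult S gmult r z}"

text \<open>Conjugacy class of g: all h^{-1} g h, i.e. all u in G with h u = g h for some h in G.\<close>
definition conj_class :: "'g set \<Rightarrow> ('g \<Rightarrow> 'g \<Rightarrow> 'g) \<Rightarrow> 'g \<Rightarrow> 'g set" where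
  "conj_class S gmult g = {u \<in> S. \<exists>h \<in> S. gmult h u = gmult g h}"

definition class_sum :: "'g set \<Rightarrow> ('g \<Rightarrow> 'a::comm_ring_1)" where
  "class_sum C = (\<lambda>z. if z \<in> C then 1 else 0)"

definition ga_span :: "'i set \<Rightarrow> ('i \<Rightarrow> 'g \<Rightarrow> 'a::comm_ring_1) \<Rightarrow> ('g \<Rightarrow> 'a) set" where
  "ga_span I v = {f. \<exists>c. f = (\<lambda>z. \<Sum>i\<in>I. c i * v i z)}"

end

theory Submission
  imports Defs "HOL-Algebra.Group"
begin

definition Tg :: "int \<Rightarrow> int \<Rightarrow> (int \<times> int) monoid" where
  "Tg m t = \<lparr>carrier = T_carrier m, monoid.mult = T_mult m t, one = T_one\<rparr>"

lemma Tg_simps: "carrier (Tg m t) = T_carrier m" "monoid.mult (Tg m t) = T_mult m t" "one (Tg m t) = T_one"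
  by (simp_all add: Tg_def)

lemma small3: "0 \<le> (a::int) \<Longrightarrow> a < 3 \<Longrightarrow> a = 0 \<or> a = 1 \<or> a = 2"
  by linarith

lemma ar1: "0 \<le> (a::int) \<Longrightarrow> a < 3 \<Longrightarrow> 0 \<le> b \<Longrightarrow> b < 3 \<Longrightarrow> ((a + b) mod 3 = a) = (b = 0)"
proof -
  assume "0 \<le> a" "a < 3" "0 \<le> b" "b < 3"
  hence "a = 0 \<or> a = 1 \<or> a = 2" "b = 0 \<or> b = 1 \<or> b = 2" using small3 by blast+
  thus ?thesis by (elim disjE) simp_all
qed

lemma ar2: "0 \<le> (q::int) \<Longrightarrow> q < 3 \<Longrightarrow> 0 \<le> v \<Longrightarrow> v < 3 \<Longrightarrow> 0 \<le> b \<Longrightarrow> b < 3 \<Longrightarrow> W = (q + v) mod 3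
   \<Longrightarrow> (v = b) = (q = (W - b) mod 3)"
proof -
  assume "0 \<le> q" "q < 3" "0 \<le> v" "v < 3" "0 \<le> b" "b < 3" and W: "W = (q + v) mod 3"
  hence "q = 0 \<or> q = 1 \<or> q = 2" "v = 0 \<or> v = 1 \<or> v = 2" "b = 0 \<or> b = 1 \<or> b = 2" using small3 by blast+
  thus ?thesis unfolding W by (elim disjE) simp_all
qed

lemma ar3: "0 \<le> (a::int) \<Longrightarrow> a < 3 \<Longrightarrow> 0 \<le> b \<Longrightarrow> b < 3 \<Longrightarrow> 0 \<le> c \<Longrightarrow> c < 3 \<Longrightarrow>
  ((a + b) mod 3 = c) = (b = (c - a) mod 3) \<and> ((a + b) mod 3 = c) = (a = (c - b) mod 3)"
proof -
  assume "0 \<le> a" "a < 3" "0 \<le> b" "b < 3" "0 \<le> c" "c < 3"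
  hence "a = 0 \<or> a = 1 \<or> a = 2" "b = 0 \<or> b = 1 \<or> b = 2" "c = 0 \<or> c = 1 \<or> c = 2" using small3 by blast+
  thus ?thesis by (elim disjE) simp_all
qed

locale T3 =
  fixes m t :: int
  assumes m_pos: "m > 0" and t3: "[t^3 = 1] (mod m)" and cop: "coprime m (t - 1)"
begin

lemma tpow_mod3: "[t ^ n = t ^ (n mod 3)] (mod m)"
proof -
  have e: "t ^ n = (t^3) ^ (n div 3) * t ^ (n mod 3)"
  proof -
    have "t ^ n = t ^ (3 * (n div 3) + n mod 3)" by simp
    also have "\<dots> = (t^3) ^ (n div 3) * t ^ (n mod 3)" by (simp only: power_add power_mult)
    finally show ?thesis .
  qed
  have "[(t^3) ^ (n div 3) * t ^ (n mod 3) = 1 ^ (n div 3) * t ^ (n mod 3)] (mod m)"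
    by (intro cong_mult cong_pow t3 cong_refl)
  thus ?thesis unfolding e power_one mult_1 .
qed

lemma cop_t: "coprime t m"
proof -
  have "[t * t^2 = 1] (mod m)" using t3 by (simp add: power3_eq_cube power2_eq_square mult.assoc)
  thus ?thesis using coprime_iff_invertible_int by blast
qed

lemma carrier_iff: "p \<in> T_carrier m \<longleftrightarrow> 0 \<le> fst p \<and> fst p < m \<and> 0 \<le> snd p \<and> snd p < 3"
  by (cases p) (auto simp: T_carrier_def)

lemma mult_closed: "T_mult m t p q \<in> T_carrier m"
  using m_pos by (simp add: carrier_iff T_mult_def)

lemma grp: "group (Tg m t)"
proof (rule groupI)
  fix x y z
  assume x: "x \<in> carrier (Tg m t)" and y: "y \<in> carrier (Tg m t)" and z: "z \<in> carrier (Tg m t)"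
  obtain x1 x2 where xx: "x = (x1, x2)" by (cases x)
  obtain y1 y2 where yy: "y = (y1, y2)" by (cases y)
  obtain z1 z2 where zz: "z = (z1, z2)" by (cases z)
  have r: "0 \<le> y2" "y2 < 3" "0 \<le> z2" "z2 < 3" using y z by (auto simp: Tg_def carrier_iff yy zz)
  have e: "nat ((y2 + z2) mod 3) = (nat y2 + nat z2) mod 3" using r by (simp add: nat_mod_distrib nat_add_distrib)
  have c1: "[t ^ nat ((y2 + z2) mod 3) = t ^ nat y2 * t ^ nat z2] (mod m)"
    unfolding e power_add[symmetric] using tpow_mod3 by (simp add: cong_sym)
  have P: "[(x1 * t ^ nat y2 + y1) mod m * t ^ nat z2 + z1 = (x1 * t ^ nat y2 + y1) * t ^ nat z2 + z1] (mod m)"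
    by (intro cong_add cong_mult cong_refl) (simp add: cong_def)
  have Q: "[x1 * t ^ nat ((y2 + z2) mod 3) + (y1 * t ^ nat z2 + z1) mod m = x1 * (t ^ nat y2 * t ^ nat z2) + (y1 * t ^ nat z2 + z1)] (mod m)"
    by (intro cong_add cong_mult cong_refl c1) (simp add: cong_def)
  have R: "(x1 * t ^ nat y2 + y1) * t ^ nat z2 + z1 = x1 * (t ^ nat y2 * t ^ nat z2) + (y1 * t ^ nat z2 + z1)"
    by (simp add: algebra_simps)
  have "[(x1 * t ^ nat y2 + y1) mod m * t ^ nat z2 + z1 = x1 * t ^ nat ((y2 + z2) mod 3) + (y1 * t ^ nat z2 + z1) mod m] (mod m)"
    using cong_trans[OF P[unfolded R] cong_sym[OF Q]] .
  hence "((x1 * t ^ nat y2 + y1) mod m * t ^ nat z2 + z1) mod m = (x1 * t ^ nat ((y2 + z2) mod 3) + (y1 * t ^ nat z2 + z1) mod m) mod m"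
    by (simp add: cong_def)
  moreover have "((x2 + y2) mod 3 + z2) mod 3 = (x2 + (y2 + z2) mod 3) mod 3"
    by (simp only: mod_add_left_eq mod_add_right_eq add.assoc)
  ultimately have "T_mult m t (T_mult m t x y) z = T_mult m t x (T_mult m t y z)"
    unfolding T_mult_def xx yy zz fst_conv snd_conv by (simp only:)
  thus "x \<otimes>\<^bsub>Tg m t\<^esub> y \<otimes>\<^bsub>Tg m t\<^esub> z = x \<otimes>\<^bsub>Tg m t\<^esub> (y \<otimes>\<^bsub>Tg m t\<^esub> z)"
    unfolding Tg_simps .
next
  fix x assume x: "x \<in> carrier (Tg m t)"
  obtain x1 x2 where xx: "x = (x1, x2)" by (cases x)
  have r: "0 \<le> x1" "x1 < m" "0 \<le> x2" "x2 < 3" using x by (auto simp: Tg_def carrier_iff xx)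
  define y1 where "y1 = (- x1 * t ^ (2 * nat x2)) mod m"
  define y2 where "y2 = (- x2) mod 3"
  have p1: "t ^ (2 * nat x2) * t ^ nat x2 = (t ^ 3) ^ nat x2"
  proof -
    have "t ^ (2 * nat x2) * t ^ nat x2 = t ^ (2 * nat x2 + nat x2)" by (simp only: power_add)
    also have "2 * nat x2 + nat x2 = 3 * nat x2" by simp
    also have "t ^ (3 * nat x2) = (t ^ 3) ^ nat x2" by (simp only: power_mult)
    finally show ?thesis .
  qed
  have "[y1 * t ^ nat x2 + x1 = (- x1 * t ^ (2 * nat x2)) * t ^ nat x2 + x1] (mod m)"
    unfolding y1_def by (intro cong_add cong_mult cong_refl) (simp add: cong_def)
  moreover have "(- x1 * t ^ (2 * nat x2)) * t ^ nat x2 + x1 = - x1 * (t ^ 3) ^ nat x2 + x1"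
    by (simp only: mult.assoc p1)
  moreover have "[- x1 * (t ^ 3) ^ nat x2 + x1 = - x1 * 1 ^ nat x2 + x1] (mod m)"
    by (intro cong_add cong_mult cong_pow t3 cong_refl)
  ultimately have "[y1 * t ^ nat x2 + x1 = - x1 * 1 ^ nat x2 + x1] (mod m)" by (metis cong_trans)
  hence "[y1 * t ^ nat x2 + x1 = 0] (mod m)" by simp
  hence a: "(y1 * t ^ nat x2 + x1) mod m = 0" by (simp add: cong_def)
  have b: "(y2 + x2) mod 3 = 0" unfolding y2_def by (simp add: mod_add_left_eq)
  have c: "(y1, y2) \<in> T_carrier m" unfolding carrier_iff y1_def y2_def using m_pos by simp
  have "T_mult m t (y1, y2) x = T_one"
    unfolding T_mult_def xx fst_conv snd_conv a b T_one_def by (rule refl)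
  thus "\<exists>y\<in>carrier (Tg m t). y \<otimes>\<^bsub>Tg m t\<^esub> x = \<one>\<^bsub>Tg m t\<^esub>"
    using c unfolding Tg_simps by blast
next
  fix x y assume "x \<in> carrier (Tg m t)" "y \<in> carrier (Tg m t)"
  show "x \<otimes>\<^bsub>Tg m t\<^esub> y \<in> carrier (Tg m t)" unfolding Tg_simps by (rule mult_closed)
next
  show "\<one>\<^bsub>Tg m t\<^esub> \<in> carrier (Tg m t)" using m_pos unfolding Tg_simps by (simp add: T_one_def T_carrier_def)
next
  fix x assume x: "x \<in> carrier (Tg m t)"
  obtain x1 x2 where xx: "x = (x1, x2)" by (cases x)
  have r: "0 \<le> x1" "x1 < m" "0 \<le> x2" "x2 < 3" using x by (auto simp: Tg_def carrier_iff xx)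
  have "T_mult m t T_one x = x"
  proof -
    have "x1 mod m = x1" "x2 mod 3 = x2" using r by simp_all
    thus ?thesis unfolding T_mult_def T_one_def xx fst_conv snd_conv mult_zero_left add_0_left by (simp only:)
  qed
  thus "\<one>\<^bsub>Tg m t\<^esub> \<otimes>\<^bsub>Tg m t\<^esub> x = x" unfolding Tg_simps .
qed



lemma mon: "monoid (Tg m t)" using group.is_monoid[OF grp] .

abbreviation iv where "iv x \<equiv> inv\<^bsub>Tg m t\<^esub> x"

lemma fin: "finite (T_carrier m)" by (simp add: T_carrier_def)

lemma snd_mult: "snd (T_mult m t p q) = (snd p + snd q) mod 3" by (simp add: T_mult_def)

lemma iv_closed: "p \<in> T_carrier m \<Longrightarrow> iv p \<in> T_carrier m"
  using group.inv_closed[OF grp, of p] by (simp add: Tg_simps)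

lemma solve_l: "p \<in> T_carrier m \<Longrightarrow> q \<in> T_carrier m \<Longrightarrow> w \<in> T_carrier m \<Longrightarrow>
   T_mult m t p q = w \<longleftrightarrow> q = T_mult m t (iv p) w"
  using group.inv_solve_left[OF grp, of q p w] unfolding Tg_simps by auto

lemma solve_r: "p \<in> T_carrier m \<Longrightarrow> q \<in> T_carrier m \<Longrightarrow> w \<in> T_carrier m \<Longrightarrow>
   T_mult m t p q = w \<longleftrightarrow> p = T_mult m t w (iv q)"
  using group.inv_solve_right[OF grp, of p w q] unfolding Tg_simps by auto

lemma one_in: "T_one \<in> T_carrier m" using m_pos by (simp add: T_one_def T_carrier_def)

lemma mult_one_l: "p \<in> T_carrier m \<Longrightarrow> T_mult m t T_one p = p"
  using monoid.l_one[OF mon, of p] unfolding Tg_simps by auto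
lemma mult_one_r: "p \<in> T_carrier m \<Longrightarrow> T_mult m t p T_one = p"
  using monoid.r_one[OF mon, of p] unfolding Tg_simps by auto
lemma assoc: "p \<in> T_carrier m \<Longrightarrow> q \<in> T_carrier m \<Longrightarrow> r \<in> T_carrier m \<Longrightarrow>
  T_mult m t (T_mult m t p q) r = T_mult m t p (T_mult m t q r)"
  using monoid.m_assoc[OF mon, of p q r] unfolding Tg_simps by auto
lemma inv_l: "p \<in> T_carrier m \<Longrightarrow> T_mult m t (iv p) p = T_one"
  using group.l_inv[OF grp, of p] unfolding Tg_simps by auto
lemma inv_r: "p \<in> T_carrier m \<Longrightarrow> T_mult m t p (iv p) = T_one"
  using group.r_inv[OF grp, of p] unfolding Tg_simps by auto

lemma prod_sum: "(\<Sum>p\<in>A\<times>B. F p) = (\<Sum>x\<in>A. \<Sum>y\<in>B. F (x, y))"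
  unfolding sum.cartesian_product by (simp add: split_def)

lemma collapse_l:
  assumes w: "w \<in> T_carrier m"
  shows "(\<Sum>p\<in>T_carrier m \<times> T_carrier m. if T_mult m t (fst p) (snd p) = w then X (fst p) (snd p) else 0)
     = (\<Sum>q\<in>T_carrier m. X q (T_mult m t (iv q) w))"
  unfolding prod_sum fst_conv snd_conv
proof (rule sum.cong[OF refl])
  fix x assume x: "x \<in> T_carrier m"
  have "(\<Sum>y\<in>T_carrier m. if T_mult m t x y = w then X x y else 0)
     = (\<Sum>y\<in>T_carrier m. if y = T_mult m t (iv x) w then X x y else 0)"
    by (rule sum.cong[OF refl]) (use solve_l[OF x _ w] in auto)
  also have "\<dots> = X x (T_mult m t (iv x) w)"
    using fin mult_closed by (simp add: sum.delta)
  finally show "(\<Sum>y\<in>T_carrier m. if T_mult m t x y = w then X x y else 0) = X x (T_mult m t (iv x) w)" .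
qed

lemma collapse_r:
  assumes w: "w \<in> T_carrier m"
  shows "(\<Sum>p\<in>T_carrier m \<times> T_carrier m. if T_mult m t (fst p) (snd p) = w then X (fst p) (snd p) else 0)
     = (\<Sum>q\<in>T_carrier m. X (T_mult m t w (iv q)) q)"
  unfolding prod_sum fst_conv snd_conv
  apply (subst sum.swap)
proof (rule sum.cong[OF refl])
  fix y assume y: "y \<in> T_carrier m"
  have "(\<Sum>x\<in>T_carrier m. if T_mult m t x y = w then X x y else 0)
     = (\<Sum>x\<in>T_carrier m. if x = T_mult m t w (iv y) then X x y else 0)"
    by (rule sum.cong[OF refl]) (use solve_r[OF _ y w] in auto)
  also have "\<dots> = X (T_mult m t w (iv y)) y"
    using fin mult_closed by (simp add: sum.delta)
  finally show "(\<Sum>x\<in>T_carrier m. if T_mult m t x y = w then X x y else 0) = X (T_mult m t w (iv y)) y" .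
qed

lemma gm_l: "w \<in> T_carrier m \<Longrightarrow> ga_mult (T_carrier m) (T_mult m t) a b w = (\<Sum>q\<in>T_carrier m. a q * b (T_mult m t (iv q) w))"
  unfolding ga_mult_def by (rule collapse_l)
lemma gm_r: "w \<in> T_carrier m \<Longrightarrow> ga_mult (T_carrier m) (T_mult m t) a b w = (\<Sum>q\<in>T_carrier m. a (T_mult m t w (iv q)) * b q)"
  unfolding ga_mult_def by (rule collapse_r)
lemma gm_out: "w \<notin> T_carrier m \<Longrightarrow> ga_mult (T_carrier m) (T_mult m t) a b w = 0"
  unfolding ga_mult_def using mult_closed by (auto intro!: sum.neutral)


lemma powx: "(T_mult m t (T_x m) ^^ n) T_one = (int n mod m, 0)"
proof (induction n)
  case 0 show ?case by (simp add: T_one_def)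
next
  case (Suc n)
  have "(1 mod m + int n mod m) mod m = int (Suc n) mod m" by (simp add: mod_add_eq)
  thus ?case using Suc by (simp add: T_mult_def T_x_def)
qed

lemma H_eq: "T_H m t = {0..<m} \<times> {0}"
proof
  show "T_H m t \<subseteq> {0..<m} \<times> {0}" unfolding T_H_def powx using m_pos by auto
  show "{0..<m} \<times> {0} \<subseteq> T_H m t"
  proof
    fix p :: "int \<times> int" assume "p \<in> {0..<m} \<times> {0}"
    then obtain a where p: "p = (a, 0)" "0 \<le> a" "a < m" by auto
    hence "p = (T_mult m t (T_x m) ^^ nat a) T_one" unfolding powx by simp
    thus "p \<in> T_H m t" unfolding T_H_def by blast
  qed
qed

lemma H_sub: "T_H m t \<subseteq> T_carrier m" unfolding H_eq T_carrier_def by auto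

definition CS :: "((int \<times> int) \<Rightarrow> 'a::comm_ring_1) \<Rightarrow> int \<Rightarrow> 'a" where
  "CS z c = (\<Sum>q\<in>T_carrier m. if snd q = c then z q else 0)"

lemma CS_mult: "CS (ga_mult (T_carrier m) (T_mult m t) a u) c
   = (\<Sum>p\<in>T_carrier m \<times> T_carrier m. if (snd (fst p) + snd (snd p)) mod 3 = c then a (fst p) * u (snd p) else 0)"
proof -
  have "CS (ga_mult (T_carrier m) (T_mult m t) a u) c = (\<Sum>w\<in>T_carrier m. \<Sum>p\<in>T_carrier m \<times> T_carrier m.
     if snd w = c then (if T_mult m t (fst p) (snd p) = w then a (fst p) * u (snd p) else 0) else 0)"
    unfolding CS_def ga_mult_def by (rule sum.cong[OF refl]) simp
  also have "\<dots> = (\<Sum>p\<in>T_carrier m \<times> T_carrier m. \<Sum>w\<in>T_carrier m.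
     if snd w = c then (if T_mult m t (fst p) (snd p) = w then a (fst p) * u (snd p) else 0) else 0)"
    by (rule sum.swap)
  also have "\<dots> = (\<Sum>p\<in>T_carrier m \<times> T_carrier m. if (snd (fst p) + snd (snd p)) mod 3 = c then a (fst p) * u (snd p) else 0)"
  proof (rule sum.cong[OF refl])
    fix p :: "(int \<times> int) \<times> (int \<times> int)"
    have "(\<Sum>w\<in>T_carrier m. if snd w = c then (if T_mult m t (fst p) (snd p) = w then a (fst p) * u (snd p) else 0) else 0)
      = (\<Sum>w\<in>T_carrier m. if T_mult m t (fst p) (snd p) = w then (if snd (T_mult m t (fst p) (snd p)) = c then a (fst p) * u (snd p) else 0) else 0)"
      by (rule sum.cong[OF refl]) auto
    also have "\<dots> = (if snd (T_mult m t (fst p) (snd p)) = c then a (fst p) * u (snd p) else 0)"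
      using fin mult_closed by (simp add: sum.delta)
    finally show "(\<Sum>w\<in>T_carrier m. if snd w = c then (if T_mult m t (fst p) (snd p) = w then a (fst p) * u (snd p) else 0) else 0)
      = (if (snd (fst p) + snd (snd p)) mod 3 = c then a (fst p) * u (snd p) else 0)"
      by (simp add: snd_mult)
  qed
  finally show ?thesis .
qed

lemma CS_out: "z \<in> grp_alg (T_carrier m) \<Longrightarrow> \<not> (0 \<le> c \<and> c < 3) \<Longrightarrow> CS z c = 0"
  unfolding CS_def grp_alg_def by (intro sum.neutral) (auto simp: carrier_iff)

lemma cond_shift: "x \<in> T_carrier m \<Longrightarrow> y \<in> T_carrier m \<Longrightarrow> 0 \<le> c \<Longrightarrow> c < 3 \<Longrightarrow>
   ((snd x + snd y) mod 3 = c) = (snd y = (c - snd x) mod 3)"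
  unfolding carrier_iff using ar3[of "snd x" "snd y" c] by blast

lemma cond_shift2: "x \<in> T_carrier m \<Longrightarrow> y \<in> T_carrier m \<Longrightarrow> 0 \<le> c \<Longrightarrow> c < 3 \<Longrightarrow>
   ((snd x + snd y) mod 3 = c) = (snd x = (c - snd y) mod 3)"
  unfolding carrier_iff using ar3[of "snd x" "snd y" c] by blast

lemma Delta_props:
  fixes u :: "(int \<times> int) \<Rightarrow> 'a::comm_ring_1"
  assumes "u \<in> Delta (T_carrier m) (T_mult m t) T_one (T_H m t)"
  shows "u \<in> grp_alg (T_carrier m) \<and> (\<forall>c. CS u c = 0)"
  using assms
proof (induction rule: Delta.induct)
  case (gen h)
  have h: "h \<in> T_carrier m" "snd h = 0" using gen H_sub unfolding H_eq by auto
  have "CS (\<lambda>z. ga_elem h z - ga_elem T_one z :: 'a) c = 0" for c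
  proof -
    have "CS (\<lambda>z. ga_elem h z - ga_elem T_one z :: 'a) c = (\<Sum>q\<in>T_carrier m. (if q = h then (if snd h = c then 1 else 0) else 0)
        - (if q = T_one then (if snd T_one = c then 1 else 0) else 0))"
      unfolding CS_def ga_elem_def by (rule sum.cong[OF refl]) auto
    also have "\<dots> = 0" using h one_in fin by (simp add: sum_subtractf sum.delta' T_one_def)
    finally show ?thesis .
  qed
  moreover have "(\<lambda>z. ga_elem h z - ga_elem T_one z :: 'a) \<in> grp_alg (T_carrier m)"
    using h one_in unfolding grp_alg_def ga_elem_def by auto
  ultimately show ?case by blast
next
  case zero
  show ?case unfolding grp_alg_def CS_def by simp
next
  case (add u v)
  have "CS (\<lambda>z. u z + v z) c = CS u c + CS v c" for c
    unfolding CS_def sum.distrib[symmetric] by (rule sum.cong) auto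
  thus ?case using add unfolding grp_alg_def by auto
next
  case (lmult a u)
  have "CS (ga_mult (T_carrier m) (T_mult m t) a u) c = 0" for c
  proof (cases "0 \<le> c \<and> c < 3")
    case True
    have "CS (ga_mult (T_carrier m) (T_mult m t) a u) c
       = (\<Sum>x\<in>T_carrier m. a x * CS u ((c - snd x) mod 3))"
      unfolding CS_mult prod_sum fst_conv snd_conv
      unfolding CS_def sum_distrib_left
      apply (rule sum.cong[OF refl])+
      using cond_shift True by auto
    thus ?thesis using lmult by simp
  next
    case False
    have "ga_mult (T_carrier m) (T_mult m t) a u \<in> grp_alg (T_carrier m)"
      unfolding grp_alg_def using gm_out by auto
    thus ?thesis using CS_out False by blast
  qed
  moreover have "ga_mult (T_carrier m) (T_mult m t) a u \<in> grp_alg (T_carrier m)"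
    unfolding grp_alg_def using gm_out by auto
  ultimately show ?case by blast
next
  case (rmult a u)
  have "CS (ga_mult (T_carrier m) (T_mult m t) u a) c = 0" for c
  proof (cases "0 \<le> c \<and> c < 3")
    case True
    have "CS (ga_mult (T_carrier m) (T_mult m t) u a) c
       = (\<Sum>y\<in>T_carrier m. a y * CS u ((c - snd y) mod 3))"
      unfolding CS_mult prod_sum fst_conv snd_conv
      unfolding CS_def sum_distrib_left
      apply (subst sum.swap)
      apply (rule sum.cong[OF refl])+
      using cond_shift2 True by auto
    thus ?thesis using rmult by simp
  next
    case False
    have "ga_mult (T_carrier m) (T_mult m t) u a \<in> grp_alg (T_carrier m)"
      unfolding grp_alg_def using gm_out by auto
    thus ?thesis using CS_out False by blast
  qed
  moreover have "ga_mult (T_carrier m) (T_mult m t) u a \<in> grp_alg (T_carrier m)"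
    unfolding grp_alg_def using gm_out by auto
  ultimately show ?case by blast
qed


abbreviation DD where "DD \<equiv> Delta (T_carrier m) (T_mult m t) T_one (T_H m t)"

lemma D_sum:
  fixes v :: "'i \<Rightarrow> (int \<times> int) \<Rightarrow> 'a::comm_ring_1"
  assumes "finite I" "\<forall>i\<in>I. v i \<in> DD"
  shows "(\<lambda>w. \<Sum>i\<in>I. v i w) \<in> DD"
  using assms
proof (induction I rule: finite_induct)
  case empty
  show ?case using Delta.zero by simp
next
  case (insert x F)
  have "(\<lambda>w. \<Sum>i\<in>insert x F. v i w) = (\<lambda>w. v x w + (\<Sum>i\<in>F. v i w))"
    using insert by simp
  moreover have "v x \<in> DD" using insert.prems by simp
  moreover have "(\<lambda>w. \<Sum>i\<in>F. v i w) \<in> DD" using insert.IH insert.prems by simp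
  ultimately show ?case using Delta.add[of "v x" _ _ _ _ "\<lambda>w. \<Sum>i\<in>F. v i w"] by simp
qed

lemma iv_one: "iv T_one = T_one"
  using monoid.inv_one[OF mon] unfolding Tg_simps .

lemma D_scal:
  fixes u :: "(int \<times> int) \<Rightarrow> 'a::comm_ring_1"
  assumes u: "u \<in> DD"
  shows "(\<lambda>w. c * u w) \<in> DD"
proof -
  have a: "(\<lambda>x. c * ga_elem T_one x) \<in> grp_alg (T_carrier m)"
    using one_in unfolding grp_alg_def ga_elem_def by auto
  have ug: "u \<in> grp_alg (T_carrier m)" using Delta_props[OF u] by blast
  have "ga_mult (T_carrier m) (T_mult m t) (\<lambda>x. c * ga_elem T_one x) u = (\<lambda>w. c * u w)"
  proof
    fix w
    show "ga_mult (T_carrier m) (T_mult m t) (\<lambda>x. c * ga_elem T_one x) u w = c * u w"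
    proof (cases "w \<in> T_carrier m")
      case True
      have "ga_mult (T_carrier m) (T_mult m t) (\<lambda>x. c * ga_elem T_one x) u w
          = (\<Sum>q\<in>T_carrier m. if q = T_one then c * u (T_mult m t (iv q) w) else 0)"
        unfolding gm_l[OF True] ga_elem_def by (rule sum.cong) auto
      also have "\<dots> = c * u w" using fin one_in True by (simp add: sum.delta iv_one mult_one_l)
      finally show ?thesis .
    next
      case False
      have "u w = 0" using ug False unfolding grp_alg_def by blast
      thus ?thesis using gm_out[OF False] by simp
    qed
  qed
  thus ?thesis using Delta.lmult[OF a u] by simp
qed

definition KK :: "int \<Rightarrow> (int \<times> int) \<Rightarrow> 'a::comm_ring_1" where
  "KK b w = (if w \<in> T_carrier m \<and> snd w = b then 1 else 0)"

definition rh :: "int \<times> int \<Rightarrow> (int \<times> int) \<Rightarrow> 'a::comm_ring_1" where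
  "rh h w = ga_elem h w - KK (snd h) w"

lemma card_H: "card (T_H m t) = nat m"
  unfolding H_eq by (simp add: card_cartesian_product)

lemma rh_in:
  assumes h: "h \<in> T_carrier m" and m1: "(of_int m :: 'a::comm_ring_1) = 1"
  shows "(rh h :: (int \<times> int) \<Rightarrow> 'a) \<in> DD"
proof -
  define Fh :: "(int \<times> int) \<Rightarrow> 'a" where "Fh = (\<lambda>w. \<Sum>h'\<in>T_H m t. ga_elem h' w - ga_elem T_one w)"
  have finH: "finite (T_H m t)" unfolding H_eq by simp
  have FhD: "Fh \<in> DD" unfolding Fh_def by (rule D_sum[OF finH]) (auto intro: Delta.gen)
  have Fhv: "Fh v = (if v \<in> T_H m t then 1 else 0) - (if v = T_one then 1 else 0)" for v
  proof -
    have "Fh v = (\<Sum>h'\<in>T_H m t. ga_elem h' v) - of_nat (card (T_H m t)) * ga_elem T_one v"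
      unfolding Fh_def by (simp add: sum_subtractf)
    also have "of_nat (card (T_H m t)) = (of_int m :: 'a)" unfolding card_H using m_pos by simp
    also have "(\<Sum>h'\<in>T_H m t. ga_elem h' v) = (if v \<in> T_H m t then 1 else (0::'a))"
      unfolding ga_elem_def using finH by (simp add: sum.delta)
    finally show ?thesis using m1 unfolding ga_elem_def by simp
  qed
  have a: "(\<lambda>x. (-1) * ga_elem h x) \<in> grp_alg (T_carrier m)"
    using h unfolding grp_alg_def ga_elem_def by auto
  have "ga_mult (T_carrier m) (T_mult m t) (\<lambda>x. (-1) * ga_elem h x) Fh = rh h"
  proof
    fix w
    show "ga_mult (T_carrier m) (T_mult m t) (\<lambda>x. (-1) * ga_elem h x) Fh w = rh h w"
    proof (cases "w \<in> T_carrier m")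
      case True
      define v where "v = T_mult m t (iv h) w"
      have v: "v \<in> T_carrier m" unfolding v_def using mult_closed .
      have hv: "T_mult m t h v = w" using solve_l[OF h v True] v_def by simp
      have "ga_mult (T_carrier m) (T_mult m t) (\<lambda>x. (-1) * ga_elem h x) Fh w
          = (\<Sum>q\<in>T_carrier m. if q = h then - Fh (T_mult m t (iv q) w) else 0)"
        unfolding gm_l[OF True] ga_elem_def by (rule sum.cong) auto
      also have "\<dots> = - Fh v" using fin h by (simp add: sum.delta v_def)
      also have "\<dots> = (if v = T_one then 1 else 0) - (if v \<in> T_H m t then 1 else 0)"
        unfolding Fhv by simp
      also have "(v = T_one) = (w = h)"
        using solve_l[OF h one_in True] mult_one_r[OF h] v_def by auto
      also have "(v \<in> T_H m t) = (snd w = snd h)"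
      proof -
        have "v \<in> T_H m t \<longleftrightarrow> snd v = 0" using v unfolding H_eq carrier_iff by (cases v) auto
        moreover have "snd w = (snd h + snd v) mod 3" using hv snd_mult by metis
        moreover have "(snd w = snd h) = (snd v = 0)"
          using ar1[of "snd h" "snd v"] v h \<open>snd w = (snd h + snd v) mod 3\<close> unfolding carrier_iff by simp
        ultimately show ?thesis by simp
      qed
      finally show ?thesis unfolding rh_def KK_def ga_elem_def using True by simp
    next
      case False
      have "w \<noteq> h" using h False by auto
      thus ?thesis using gm_out[OF False] False unfolding rh_def KK_def ga_elem_def by simp
    qed
  qed
  thus ?thesis using Delta.lmult[OF a FhD] by simp
qed

lemma gm_diff_r: "ga_mult S gm a (\<lambda>x. b x - c x) w = ga_mult S gm a b w - ga_mult S gm a c w"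
  unfolding ga_mult_def sum_subtractf[symmetric] by (rule sum.cong) (auto simp: right_diff_distrib)

lemma gm_diff_l: "ga_mult S gm (\<lambda>x. b x - c x) a w = ga_mult S gm b a w - ga_mult S gm c a w"
  unfolding ga_mult_def sum_subtractf[symmetric] by (rule sum.cong) (auto simp: left_diff_distrib)


lemma KK_r:
  fixes z :: "(int \<times> int) \<Rightarrow> 'a::comm_ring_1"
  assumes w: "w \<in> T_carrier m" and b: "0 \<le> b" "b < 3" and CSz: "\<forall>c. CS z c = 0"
  shows "ga_mult (T_carrier m) (T_mult m t) z (KK b) w = 0"
proof -
  have "ga_mult (T_carrier m) (T_mult m t) z (KK b) w = (\<Sum>q\<in>T_carrier m. if snd q = (snd w - b) mod 3 then z q else 0)"
    unfolding gm_l[OF w]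
  proof (rule sum.cong[OF refl])
    fix q assume q: "q \<in> T_carrier m"
    define v where "v = T_mult m t (iv q) w"
    have v: "v \<in> T_carrier m" unfolding v_def using mult_closed .
    have "T_mult m t q v = w" using solve_l[OF q v w] v_def by simp
    hence W: "snd w = (snd q + snd v) mod 3" using snd_mult by metis
    have "(snd v = b) = (snd q = (snd w - b) mod 3)"
      by (rule ar2[OF _ _ _ _ b W]) (use q v in \<open>auto simp: carrier_iff\<close>)
    thus "z q * KK b (T_mult m t (iv q) w) = (if snd q = (snd w - b) mod 3 then z q else 0)"
      unfolding KK_def v_def[symmetric] using v by auto
  qed
  also have "\<dots> = 0" using CSz unfolding CS_def by simp
  finally show ?thesis .
qed

lemma KK_l:
  fixes z :: "(int \<times> int) \<Rightarrow> 'a::comm_ring_1"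
  assumes w: "w \<in> T_carrier m" and b: "0 \<le> b" "b < 3" and CSz: "\<forall>c. CS z c = 0"
  shows "ga_mult (T_carrier m) (T_mult m t) (KK b) z w = 0"
proof -
  have "ga_mult (T_carrier m) (T_mult m t) (KK b) z w = (\<Sum>q\<in>T_carrier m. if snd q = (snd w - b) mod 3 then z q else 0)"
    unfolding gm_r[OF w]
  proof (rule sum.cong[OF refl])
    fix q assume q: "q \<in> T_carrier m"
    define v where "v = T_mult m t w (iv q)"
    have v: "v \<in> T_carrier m" unfolding v_def using mult_closed .
    have "T_mult m t v q = w" using solve_r[OF v q w] v_def by simp
    hence W: "snd w = (snd q + snd v) mod 3" using snd_mult by (metis add.commute)
    have "(snd v = b) = (snd q = (snd w - b) mod 3)"
      by (rule ar2[OF _ _ _ _ b W]) (use q v in \<open>auto simp: carrier_iff\<close>)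
    thus "KK b (T_mult m t w (iv q)) * z q = (if snd q = (snd w - b) mod 3 then z q else 0)"
      unfolding KK_def v_def[symmetric] using v by auto
  qed
  also have "\<dots> = 0" using CSz unfolding CS_def by simp
  finally show ?thesis .
qed

lemma elem_r: "h \<in> T_carrier m \<Longrightarrow> w \<in> T_carrier m \<Longrightarrow>
  ga_mult (T_carrier m) (T_mult m t) z (ga_elem h) w = (z (T_mult m t w (iv h)) :: 'a::comm_ring_1)"
  unfolding gm_r ga_elem_def using fin by (simp add: sum.delta' if_distrib cong: if_cong)

lemma elem_l: "h \<in> T_carrier m \<Longrightarrow> w \<in> T_carrier m \<Longrightarrow>
  ga_mult (T_carrier m) (T_mult m t) (ga_elem h) z w = (z (T_mult m t (iv h) w) :: 'a::comm_ring_1)"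
proof -
  assume h: "h \<in> T_carrier m" and w: "w \<in> T_carrier m"
  have "ga_mult (T_carrier m) (T_mult m t) (ga_elem h) z w = (\<Sum>q\<in>T_carrier m. if q = h then z (T_mult m t (iv q) w) else 0)"
    unfolding gm_l[OF w] ga_elem_def by (rule sum.cong) auto
  thus ?thesis using fin h by (simp add: sum.delta)
qed

lemma center_inv:
  fixes z :: "(int \<times> int) \<Rightarrow> 'a::comm_ring_1"
  assumes m1: "(of_int m :: 'a) = 1" and zD: "z \<in> DD"
    and comm: "\<forall>r\<in>DD. ga_mult (T_carrier m) (T_mult m t) z r = ga_mult (T_carrier m) (T_mult m t) r z"
    and h: "h \<in> T_carrier m" and w: "w \<in> T_carrier m"
  shows "z (T_mult m t w (iv h)) = z (T_mult m t (iv h) w)"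
proof -
  have CSz: "\<forall>c. CS z c = 0" using Delta_props[OF zD] by blast
  have b: "0 \<le> snd h" "snd h < 3" using h by (auto simp: carrier_iff)
  have "ga_mult (T_carrier m) (T_mult m t) z (rh h) w = ga_mult (T_carrier m) (T_mult m t) (rh h) z w"
    using comm rh_in[OF h m1] by simp
  moreover have "ga_mult (T_carrier m) (T_mult m t) z (rh h) w = z (T_mult m t w (iv h))"
    unfolding rh_def[abs_def] gm_diff_r elem_r[OF h w] KK_r[OF w b CSz] by simp
  moreover have "ga_mult (T_carrier m) (T_mult m t) (rh h) z w = z (T_mult m t (iv h) w)"
    unfolding rh_def[abs_def] gm_diff_l elem_l[OF h w] KK_l[OF w b CSz] by simp
  ultimately show ?thesis by simp
qed

lemma center_class:
  fixes z :: "(int \<times> int) \<Rightarrow> 'a::comm_ring_1"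
  assumes m1: "(of_int m :: 'a) = 1" and zD: "z \<in> DD"
    and comm: "\<forall>r\<in>DD. ga_mult (T_carrier m) (T_mult m t) z r = ga_mult (T_carrier m) (T_mult m t) r z"
    and h: "h \<in> T_carrier m" and u: "u \<in> T_carrier m" and gg: "g \<in> T_carrier m"
    and e: "T_mult m t h u = T_mult m t g h"
  shows "z u = z g"
proof -
  define w where "w = T_mult m t h u"
  have w: "w \<in> T_carrier m" unfolding w_def using mult_closed .
  have "u = T_mult m t (iv h) w" using solve_l[OF h u w] w_def by simp
  moreover have "g = T_mult m t w (iv h)" using solve_r[OF gg h w] w_def e by simp
  ultimately show ?thesis using center_inv[OF m1 zD comm h w] by simp
qed

lemma comm_classfun:
  fixes f :: "(int \<times> int) \<Rightarrow> 'a::comm_ring_1"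
  assumes inv: "\<And>h u g. h \<in> T_carrier m \<Longrightarrow> u \<in> T_carrier m \<Longrightarrow> g \<in> T_carrier m \<Longrightarrow> T_mult m t h u = T_mult m t g h \<Longrightarrow> f u = f g"
  shows "ga_mult (T_carrier m) (T_mult m t) f r = ga_mult (T_carrier m) (T_mult m t) r f"
proof
  fix w
  show "ga_mult (T_carrier m) (T_mult m t) f r w = ga_mult (T_carrier m) (T_mult m t) r f w"
  proof (cases "w \<in> T_carrier m")
    case True
    show ?thesis unfolding gm_r[OF True, of f r] gm_l[OF True, of r f]
    proof (rule sum.cong[OF refl])
      fix q assume q: "q \<in> T_carrier m"
      define u where "u = T_mult m t (iv q) w"
      define g where "g = T_mult m t w (iv q)"
      have u: "u \<in> T_carrier m" unfolding u_def using mult_closed .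
      have gg: "g \<in> T_carrier m" unfolding g_def using mult_closed .
      have "T_mult m t q u = w" using solve_l[OF q u True] u_def by simp
      moreover have "T_mult m t g q = w" using solve_r[OF gg q True] g_def by simp
      ultimately have "f u = f g" using inv[OF q u gg] by simp
      thus "f (T_mult m t w (iv q)) * r q = r q * f (T_mult m t (iv q) w)"
        unfolding u_def g_def by (simp add: mult.commute)
    qed
  next
    case False
    show ?thesis using gm_out[OF False, of f r] gm_out[OF False, of r f] by simp
  qed
qed


abbreviation cls where "cls g \<equiv> conj_class (T_carrier m) (T_mult m t) g"

lemma cls_refl: "g \<in> T_carrier m \<Longrightarrow> g \<in> cls g"
  unfolding conj_class_def using one_in mult_one_l mult_one_r by auto

lemma cls_sym:
  assumes gg: "g \<in> T_carrier m" and u: "u \<in> cls g"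
  shows "g \<in> cls u"
proof -
  obtain h where h: "h \<in> T_carrier m" and uu: "u \<in> T_carrier m" and e: "T_mult m t h u = T_mult m t g h"
    using u unfolding conj_class_def by auto
  have "g = T_mult m t (T_mult m t h u) (iv h)"
    using group.inv_solve_right[OF grp, of g "h \<otimes>\<^bsub>Tg m t\<^esub> u" h] e h uu gg unfolding Tg_simps by (simp add: mult_closed)
  hence "g = T_mult m t h (T_mult m t u (iv h))" using assoc h uu iv_closed by simp
  hence "T_mult m t (iv h) g = T_mult m t u (iv h)"
    using group.inv_solve_left'[OF grp, of "u \<otimes>\<^bsub>Tg m t\<^esub> iv h" h g] h uu gg iv_closed unfolding Tg_simps by (simp add: mult_closed)
  thus ?thesis unfolding conj_class_def using gg iv_closed[OF h] by blast
qed

lemma cls_trans: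
  assumes u: "u \<in> cls g" and gg: "g \<in> cls g0" and g0: "g0 \<in> T_carrier m"
  shows "u \<in> cls g0"
proof -
  obtain h1 where h1: "h1 \<in> T_carrier m" and uu: "u \<in> T_carrier m" and e1: "T_mult m t h1 u = T_mult m t g h1"
    using u unfolding conj_class_def by auto
  obtain h2 where h2: "h2 \<in> T_carrier m" and g: "g \<in> T_carrier m" and e2: "T_mult m t h2 g = T_mult m t g0 h2"
    using gg unfolding conj_class_def by auto
  have "T_mult m t (T_mult m t h2 h1) u = T_mult m t h2 (T_mult m t h1 u)" using assoc h1 h2 uu by simp
  also have "\<dots> = T_mult m t (T_mult m t h2 g) h1" unfolding e1 using assoc h1 h2 g by simp
  also have "\<dots> = T_mult m t g0 (T_mult m t h2 h1)" unfolding e2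
  proof -
    show "T_mult m t (T_mult m t g0 h2) h1 = T_mult m t g0 (T_mult m t h2 h1)" using assoc g0 h1 h2 by simp
  qed
  finally show ?thesis unfolding conj_class_def using uu h1 h2 mult_closed by blast
qed

lemma cls_sub: "cls g \<subseteq> T_carrier m" unfolding conj_class_def by auto

lemma cls_eq:
  assumes g1: "g1 \<in> T_carrier m" and g2: "g2 \<in> cls g1"
  shows "cls g1 = cls g2"
proof
  show "cls g1 \<subseteq> cls g2"
  proof
    fix x assume "x \<in> cls g1"
    moreover have "g1 \<in> cls g2" using cls_sym[OF g1 g2] .
    ultimately show "x \<in> cls g2" using cls_trans cls_sub g2 by blast
  qed
  show "cls g2 \<subseteq> cls g1" using cls_trans g2 g1 by blast
qed

lemma not_one: assumes gg: "g \<in> T_carrier m" "g \<noteq> T_one" shows "T_one \<notin> cls g"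
proof
  assume "T_one \<in> cls g"
  then obtain h where h: "h \<in> T_carrier m" and e: "T_mult m t h T_one = T_mult m t g h"
    unfolding conj_class_def by auto
  hence "T_mult m t g h = h" using mult_one_r by simp
  hence "g = T_one" using group.r_cancel_one[OF grp, of h g] h gg unfolding Tg_simps by simp
  thus False using gg by simp
qed

lemma nt1: assumes "0 < j" "j < m" shows "\<not> [j * t = j] (mod m)"
proof
  assume "[j * t = j] (mod m)"
  hence "m dvd j * t - j" by (simp add: cong_iff_dvd_diff)
  hence "m dvd j * (t - 1)" by (simp add: right_diff_distrib)
  hence "m dvd j" using cop by (simp add: coprime_dvd_mult_left_iff)
  thus False using assms zdvd_imp_le by fastforce
qed

lemma cls_explicit:
  assumes j: "0 < j" "j < m"
  shows "cls (j, 0) = {(j, 0), (j * t mod m, 0), (j * t^2 mod m, 0)}"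
proof
  show "cls (j, 0) \<subseteq> {(j, 0), (j * t mod m, 0), (j * t^2 mod m, 0)}"
  proof
    fix u assume "u \<in> cls (j, 0)"
    then obtain h where h: "h \<in> T_carrier m" and uu: "u \<in> T_carrier m" and e: "T_mult m t h u = T_mult m t (j, 0) h"
      unfolding conj_class_def by auto
    obtain h1 h2 where hh: "h = (h1, h2)" by (cases h)
    obtain u1 u2 where ux: "u = (u1, u2)" by (cases u)
    have r: "0 \<le> h1" "h1 < m" "0 \<le> h2" "h2 < 3" "0 \<le> u1" "u1 < m" "0 \<le> u2" "u2 < 3"
      using h uu unfolding hh ux carrier_iff by auto
    have e1: "(h1 * t ^ nat u2 + u1) mod m = (j * t ^ nat h2 + h1) mod m"
      and e2: "(h2 + u2) mod 3 = (0 + h2) mod 3"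
      using e unfolding hh ux T_mult_def by auto
    have u2: "u2 = 0" using e2 ar1[of h2 u2] r by simp
    have "[h1 + u1 = j * t ^ nat h2 + h1] (mod m)" using e1 u2 by (simp add: cong_def add.commute)
    hence "[u1 = j * t ^ nat h2] (mod m)" by (metis add.commute cong_add_rcancel)
    hence u1: "u1 = j * t ^ nat h2 mod m" using r by (simp add: cong_def)
    have "h2 = 0 \<or> h2 = 1 \<or> h2 = 2" using r by auto
    thus "u \<in> {(j, 0), (j * t mod m, 0), (j * t^2 mod m, 0)}"
      using u1 u2 j unfolding ux by auto
  qed
  show "{(j, 0), (j * t mod m, 0), (j * t^2 mod m, 0)} \<subseteq> cls (j, 0)"
  proof -
    have "(j * t ^ b mod m, 0) \<in> cls (j, 0)" if b: "b = 0 \<or> b = 1 \<or> b = 2" for b :: nat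
    proof -
      have h: "(0, int b) \<in> T_carrier m" using b m_pos unfolding carrier_iff by auto
      have "T_mult m t (0, int b) (j * t ^ b mod m, 0) = T_mult m t (j, 0) (0, int b)"
        using b unfolding T_mult_def by auto
      moreover have "(j * t ^ b mod m, 0) \<in> T_carrier m" using m_pos unfolding carrier_iff by simp
      ultimately show ?thesis unfolding conj_class_def using h by blast
    qed
    from this[of 0] this[of 1] this[of 2] show ?thesis using j by simp
  qed
qed

lemma card_cls:
  assumes j: "0 < j" "j < m"
  shows "card (cls (j, 0)) = 3"
proof -
  have t3': "[j * t^3 = j * 1] (mod m)" using cong_mult[OF cong_refl t3] .
  have a: "j \<noteq> j * t mod m"
  proof
    assume "j = j * t mod m"
    hence "[j * t = j] (mod m)" using j by (simp add: cong_def)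
    thus False using nt1 j by blast
  qed
  have b: "j \<noteq> j * t^2 mod m"
  proof
    assume "j = j * t^2 mod m"
    hence "[j * t^2 = j] (mod m)" using j by (simp add: cong_def)
    hence "[j * t^2 * t = j * t] (mod m)" using cong_mult[OF _ cong_refl] by blast
    hence "[j * t^3 = j * t] (mod m)" by (simp add: power3_eq_cube power2_eq_square mult.assoc)
    hence "[j * t = j] (mod m)" using t3' by (metis cong_sym cong_trans mult_1_right)
    thus False using nt1 j by blast
  qed
  have c: "j * t mod m \<noteq> j * t^2 mod m"
  proof
    assume "j * t mod m = j * t^2 mod m"
    hence "[j * t^2 = j * t] (mod m)" by (simp add: cong_def)
    hence "[j * t^2 * t^2 = j * t * t^2] (mod m)" using cong_mult[OF _ cong_refl] by blast
    hence "[j * t^3 * t = j * t^3] (mod m)" by (simp add: power3_eq_cube power2_eq_square mult.assoc mult.commute mult.left_commute)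
    moreover have "[j * t^3 * t = j * 1 * t] (mod m)" using cong_mult[OF t3' cong_refl] .
    ultimately have "[j * t = j] (mod m)" using t3' by (metis cong_sym cong_trans mult_1_right)
    thus False using nt1 j by blast
  qed
  show ?thesis unfolding cls_explicit[OF j] using a b c by simp
qed


lemma coprime_t2: "coprime (t^2 - 1) m"
proof -
  have "m dvd t^3 - 1" using t3 by (simp add: cong_iff_dvd_diff)
  moreover have "t^3 - 1 = (t - 1) * (t^2 + t + 1)" by (simp add: algebra_simps power2_eq_square power3_eq_cube)
  ultimately have "m dvd (t - 1) * (t^2 + t + 1)" by simp
  hence d: "m dvd t^2 + t + 1" using cop by (simp add: coprime_dvd_mult_right_iff)
  have eq: "(t + 1) * (- t) - 1 = - (t^2 + t + 1)" by (simp add: algebra_simps power2_eq_square)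
  have "[(t + 1) * (- t) = 1] (mod m)" unfolding cong_iff_dvd_diff eq using d by (simp only: dvd_minus_iff)
  hence c1: "coprime (t + 1) m" using coprime_iff_invertible_int by blast
  have c2: "coprime (t - 1) m" using cop by (simp add: ac_simps)
  have "coprime ((t - 1) * (t + 1)) m" using c1 c2 by simp
  moreover have "(t - 1) * (t + 1) = t^2 - 1" by (simp add: algebra_simps power2_eq_square)
  ultimately show ?thesis by simp
qed

lemma off_cls:
  assumes b: "b = 1 \<or> b = 2" and a: "0 \<le> a" "a < m"
  shows "(a, b) \<in> cls (0, b)"
proof -
  have "coprime (t ^ nat b - 1) m" using b coprime_t2 cop by (auto simp: ac_simps)
  then obtain s where s: "[(t ^ nat b - 1) * s = 1] (mod m)" using cong_solve_coprime_int by blast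
  define c where "c = (- a * s) mod m"
  have "[c * (t ^ nat b - 1) = (- a * s) * (t ^ nat b - 1)] (mod m)"
    unfolding c_def by (rule cong_mult) (simp_all add: cong_def)
  moreover have "[(- a * s) * (t ^ nat b - 1) = (- a) * 1] (mod m)"
    using cong_mult[OF cong_refl[of "- a"] s] by (simp add: ac_simps)
  ultimately have "[c * (t ^ nat b - 1) = - a] (mod m)" using cong_trans by fastforce
  hence dv: "m dvd c * (t ^ nat b - 1) - (- a)" by (simp only: cong_iff_dvd_diff)
  have eq: "c * t ^ nat b + a - c = c * (t ^ nat b - 1) - (- a)" by (simp add: algebra_simps)
  have "[c * t ^ nat b + a = c] (mod m)" unfolding cong_iff_dvd_diff eq by (rule dv)
  hence e: "(c * t ^ nat b + a) mod m = c" unfolding c_def by (simp add: cong_def)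
  have "T_mult m t (c, 0) (a, b) = T_mult m t (0, b) (c, 0)"
    using e b unfolding T_mult_def c_def by auto
  moreover have "(c, 0) \<in> T_carrier m" "(a, b) \<in> T_carrier m"
    using m_pos a b unfolding c_def carrier_iff by auto
  ultimately show ?thesis unfolding conj_class_def by blast
qed

lemma card_snd: "0 \<le> b \<Longrightarrow> b < 3 \<Longrightarrow> card {q \<in> T_carrier m. snd q = b} = nat m"
proof -
  assume "0 \<le> b" "b < 3"
  hence "{q \<in> T_carrier m. snd q = b} = {0..<m} \<times> {b}" unfolding T_carrier_def by auto
  thus ?thesis by (simp add: card_cartesian_product)
qed

lemma sum_snd_const:
  fixes z :: "(int \<times> int) \<Rightarrow> 'a::comm_ring_1"
  assumes "0 \<le> b" "b < 3" "\<And>q. q \<in> T_carrier m \<Longrightarrow> snd q = b \<Longrightarrow> z q = v"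
  shows "CS z b = of_int m * v"
proof -
  have "CS z b = (\<Sum>q\<in>T_carrier m. if snd q = b then v else 0)"
    unfolding CS_def by (rule sum.cong) (auto simp: assms)
  also have "\<dots> = (\<Sum>q\<in>{q \<in> T_carrier m. snd q = b}. v)" using sum.inter_filter[OF fin, symmetric] .
  also have "\<dots> = of_int m * v" using card_snd[OF assms(1,2)] m_pos by simp
  finally show ?thesis .
qed


lemma main:
  fixes k :: nat
  assumes mk: "m = 3 * int k + 1" and c3: "(3::'a::comm_ring_1) = 0"
  shows "card {C. \<exists>g \<in> T_H m t - {T_one}. C = cls g} = k \<and>
    ga_center (T_carrier m) (T_mult m t) (DD :: ((int \<times> int) \<Rightarrow> 'a) set)
      = ga_span {C. \<exists>g \<in> T_H m t - {T_one}. C = cls g} class_sum"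
proof -
  define Cls where "Cls = {C. \<exists>g \<in> T_H m t - {T_one}. C = cls g}"
  have m1: "(of_int m :: 'a) = 1" using c3 mk by simp
  have HO: "g \<in> T_H m t - {T_one} \<longleftrightarrow> (\<exists>j. g = (j, 0) \<and> 0 < j \<and> j < m)" for g
    unfolding H_eq T_one_def by (cases g) auto
  have HG: "T_H m t - {T_one} \<subseteq> T_carrier m" using H_sub by auto
  have C1: "\<exists>j. 0 < j \<and> j < m \<and> C = cls (j, 0)" if CC: "C \<in> Cls" for C
  proof -
    obtain g where g: "g \<in> T_H m t - {T_one}" "C = cls g" using CC unfolding Cls_def by blast
    obtain j where j: "g = (j, 0)" "0 < j" "j < m" using HO[of g] g(1) by blast
    show ?thesis using g(2) j by blast
  qed
  have Ccard: "card C = 3" if CC: "C \<in> Cls" for C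
  proof -
    obtain j where j: "0 < j" "j < m" "C = cls (j, 0)" using C1[OF CC] by blast
    show ?thesis using card_cls[OF j(1,2)] j(3) by simp
  qed
  have Cfin: "finite C" if CC: "C \<in> Cls" for C
  proof (rule ccontr)
    assume "infinite C" hence "card C = 0" by simp
    thus False using Ccard[OF CC] by simp
  qed
  have Csub: "C \<subseteq> T_H m t - {T_one}" if CC: "C \<in> Cls" for C
  proof
    fix x assume x: "x \<in> C"
    obtain j where j: "0 < j" "j < m" "C = cls (j, 0)" using C1[OF CC] by blast
    have "x \<in> {0..<m} \<times> {0}" using x m_pos j unfolding cls_explicit[OF j(1,2)] by auto
    moreover have "x \<noteq> T_one"
    proof
      assume "x = T_one"
      moreover have "(j, 0) \<in> T_carrier m" "(j, 0) \<noteq> T_one" using j unfolding carrier_iff T_one_def by auto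
      ultimately show False using not_one x j(3) by blast
    qed
    ultimately show "x \<in> T_H m t - {T_one}" unfolding H_eq by simp
  qed
  have Cdisj: "C1 = C2" if CC: "C1 \<in> Cls" "C2 \<in> Cls" "x \<in> C1" "x \<in> C2" for C1 C2 x
  proof -
    obtain g1 where g1: "g1 \<in> T_carrier m" "C1 = cls g1" using CC(1) HG unfolding Cls_def by blast
    obtain g2 where g2: "g2 \<in> T_carrier m" "C2 = cls g2" using CC(2) HG unfolding Cls_def by blast
    have "cls g1 = cls x" using cls_eq[OF g1(1)] CC(3) g1(2) by simp
    moreover have "cls g2 = cls x" using cls_eq[OF g2(1)] CC(4) g2(2) by simp
    ultimately show ?thesis using g1 g2 by simp
  qed
  have Cun: "\<Union>Cls = T_H m t - {T_one}"
  proof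
    show "\<Union>Cls \<subseteq> T_H m t - {T_one}" using Csub by blast
    show "T_H m t - {T_one} \<subseteq> \<Union>Cls"
    proof
      fix g assume g: "g \<in> T_H m t - {T_one}"
      hence "g \<in> cls g" using cls_refl HG by blast
      moreover have "cls g \<in> Cls" using g unfolding Cls_def by blast
      ultimately show "g \<in> \<Union>Cls" by blast
    qed
  qed
  have finH: "finite (T_H m t)" unfolding H_eq by simp
  have finCls: "finite Cls"
  proof -
    have "Cls = cls ` (T_H m t - {T_one})" unfolding Cls_def by auto
    thus ?thesis using finH by simp
  qed
  have pw: "pairwise disjnt Cls" unfolding pairwise_def disjnt_def using Cdisj by blast
  have cardCls: "card Cls = k"
  proof -
    have "card (\<Union>Cls) = sum card Cls" by (rule card_Union_disjoint[OF pw Cfin])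
    also have "\<dots> = sum (\<lambda>_. 3) Cls" using Ccard by (intro sum.cong) auto
    also have "\<dots> = 3 * card Cls" by simp
    finally have a: "card (\<Union>Cls) = 3 * card Cls" .
    have one_H: "T_one \<in> T_H m t" unfolding H_eq T_one_def using m_pos by simp
    have "card (T_H m t - {T_one}) = nat m - 1" using card_Diff_singleton[OF one_H] card_H by simp
    also have "\<dots> = 3 * k" using mk by simp
    finally show ?thesis using a Cun by simp
  qed
  have Cinv: "(u \<in> C) = (g \<in> C)" if C: "C \<in> Cls" and h: "h \<in> T_carrier m" and u: "u \<in> T_carrier m"
     and gg: "g \<in> T_carrier m" and e: "T_mult m t h u = T_mult m t g h" for C h u g
  proof -
    obtain g0 where g0: "g0 \<in> T_carrier m" "C = cls g0" using C HG unfolding Cls_def by blast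
    have ug: "u \<in> cls g" unfolding conj_class_def using u h e by blast
    show ?thesis
    proof
      assume "u \<in> C"
      hence "u \<in> cls g0" using g0 by simp
      moreover have "g \<in> cls u" using cls_sym[OF gg ug] .
      ultimately show "g \<in> C" using cls_trans g0 by blast
    next
      assume "g \<in> C"
      thus "u \<in> C" using cls_trans[OF ug _ g0(1)] g0 by blast
    qed
  qed
  have csD: "class_sum C \<in> (DD :: ((int \<times> int) \<Rightarrow> 'a) set)" if C: "C \<in> Cls" for C
  proof -
    have "class_sum C = (\<lambda>w. \<Sum>g\<in>C. (ga_elem g w - ga_elem T_one w :: 'a))"
    proof
      fix w
      have "(\<Sum>g\<in>C. (ga_elem g w - ga_elem T_one w :: 'a)) = (\<Sum>g\<in>C. ga_elem g w) - of_nat (card C) * ga_elem T_one w"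
        by (simp add: sum_subtractf)
      also have "(\<Sum>g\<in>C. ga_elem g w :: 'a) = (if w \<in> C then 1 else 0)"
        unfolding ga_elem_def using Cfin[OF C] by (simp add: sum.delta')
      also have "of_nat (card C) = (3::'a)" using Ccard[OF C] by simp
      finally show "class_sum C w = (\<Sum>g\<in>C. (ga_elem g w - ga_elem T_one w :: 'a))"
        unfolding class_sum_def using c3 by simp
    qed
    moreover have "(\<lambda>w. \<Sum>g\<in>C. (ga_elem g w - ga_elem T_one w :: 'a)) \<in> DD"
      using Csub[OF C] by (intro D_sum[OF Cfin[OF C]]) (auto intro: Delta.gen)
    ultimately show ?thesis by simp
  qed
  have sup: "ga_span Cls class_sum \<subseteq> ga_center (T_carrier m) (T_mult m t) (DD :: ((int \<times> int) \<Rightarrow> 'a) set)"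
  proof
    fix f :: "(int \<times> int) \<Rightarrow> 'a" assume "f \<in> ga_span Cls class_sum"
    then obtain c where f: "f = (\<lambda>w. \<Sum>C\<in>Cls. c C * class_sum C w)" unfolding ga_span_def by blast
    have fD: "f \<in> DD" unfolding f by (rule D_sum[OF finCls]) (auto intro: D_scal csD)
    have "ga_mult (T_carrier m) (T_mult m t) f r = ga_mult (T_carrier m) (T_mult m t) r f" for r
    proof (rule comm_classfun)
      fix h u g assume h: "h \<in> T_carrier m" and u: "u \<in> T_carrier m" and gg: "g \<in> T_carrier m"
        and e: "T_mult m t h u = T_mult m t g h"
      show "f u = f g" unfolding f class_sum_def
        by (rule sum.cong[OF refl]) (use Cinv[OF _ h u gg e] in auto)
    qed
    thus "f \<in> ga_center (T_carrier m) (T_mult m t) DD" unfolding ga_center_def using fD by blast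
  qed
  have sub: "ga_center (T_carrier m) (T_mult m t) (DD :: ((int \<times> int) \<Rightarrow> 'a) set) \<subseteq> ga_span Cls class_sum"
  proof
    fix z :: "(int \<times> int) \<Rightarrow> 'a" assume "z \<in> ga_center (T_carrier m) (T_mult m t) DD"
    hence zD: "z \<in> DD" and comm: "\<forall>r\<in>DD. ga_mult (T_carrier m) (T_mult m t) z r = ga_mult (T_carrier m) (T_mult m t) r z"
      unfolding ga_center_def by auto
    have CSz: "\<forall>c. CS z c = 0" and zg: "z \<in> grp_alg (T_carrier m)" using Delta_props[OF zD] by auto
    note zinv = center_class[OF m1 zD comm]
    have zC: "z x = z y" if C: "C \<in> Cls" and x: "x \<in> C" and y: "y \<in> C" for C x y
    proof -
      obtain g0 where g0: "g0 \<in> T_carrier m" "C = cls g0" using C HG unfolding Cls_def by blast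
      have "cls g0 = cls x" using cls_eq[OF g0(1)] x g0(2) by simp
      hence "y \<in> cls x" using y g0 by simp
      then obtain h where h: "h \<in> T_carrier m" "y \<in> T_carrier m" "T_mult m t h y = T_mult m t x h"
        unfolding conj_class_def by blast
      have "x \<in> T_carrier m" using x g0 cls_sub by blast
      thus ?thesis using zinv[OF h(1,2) _ h(3)] by simp
    qed
    have zoff: "z w = 0" if w: "w \<in> T_carrier m" "snd w \<noteq> 0" for w
    proof -
      define b where "b = snd w"
      have b: "b = 1 \<or> b = 2" using w unfolding b_def carrier_iff by auto
      have b0: "(0, b) \<in> T_carrier m" using b m_pos unfolding carrier_iff by auto
      have zq: "z q = z (0, b)" if q: "q \<in> T_carrier m" "snd q = b" for q
      proof -
        obtain a where qa: "q = (a, b)" using q by (cases q) auto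
        have "(a, b) \<in> cls (0, b)" using off_cls[OF b] q unfolding qa carrier_iff by auto
        then obtain h where h: "h \<in> T_carrier m" "(a, b) \<in> T_carrier m" "T_mult m t h (a, b) = T_mult m t (0, b) h"
          unfolding conj_class_def by blast
        show ?thesis using zinv[OF h(1,2) b0 h(3)] qa by simp
      qed
      have b01: "0 \<le> b" "b < 3" using b by auto
      have "CS z b = of_int m * z (0, b)"
        apply (rule sum_snd_const[OF b01])
        apply (rule zq)
         apply assumption+
        done
      hence "z (0, b) = 0" using CSz m1 by simp
      thus ?thesis using zq[OF w(1)] b_def by simp
    qed
    have sC: "(\<Sum>x\<in>C. z x) = 0" if C: "C \<in> Cls" for C
    proof -
      have "C \<noteq> {}" using Ccard[OF C] by auto
      then obtain y where y: "y \<in> C" by blast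
      have "(\<Sum>x\<in>C. z x) = (\<Sum>x\<in>C. z y)" using zC[OF C _ y] by (intro sum.cong) auto
      also have "\<dots> = of_nat (card C) * z y" by simp
      also have "\<dots> = 0" using Ccard[OF C] c3 by simp
      finally show ?thesis .
    qed
    have zone: "z T_one = 0"
    proof -
      have one_H: "T_one \<in> T_H m t" unfolding H_eq T_one_def using m_pos by simp
      have "{q \<in> T_carrier m. snd q = 0} = T_H m t" unfolding H_eq T_carrier_def by auto
      hence "CS z 0 = (\<Sum>q\<in>T_H m t. z q)" unfolding CS_def using sum.inter_filter[OF fin, of z "\<lambda>q. snd q = 0"] by simp
      also have "\<dots> = z T_one + (\<Sum>q\<in>T_H m t - {T_one}. z q)" by (rule sum.remove[OF finH one_H])
      also have "(\<Sum>q\<in>T_H m t - {T_one}. z q) = (\<Sum>C\<in>Cls. \<Sum>x\<in>C. z x)"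
      proof -
        have fa: "\<forall>A\<in>Cls. finite A" using Cfin by blast
        have dj: "\<forall>A\<in>Cls. \<forall>B\<in>Cls. A \<noteq> B \<longrightarrow> A \<inter> B = {}" using Cdisj by blast
        show ?thesis unfolding Cun[symmetric] using sum.Union_disjoint[OF fa dj, of z] by (simp add: o_def)
      qed
      also have "\<dots> = 0" using sC by simp
      finally show ?thesis using CSz by simp
    qed
    define c where "c C = z (SOME y. y \<in> C)" for C
    have "z = (\<lambda>w. \<Sum>C\<in>Cls. c C * class_sum C w)"
    proof
      fix w
      show "z w = (\<Sum>C\<in>Cls. c C * class_sum C w)"
      proof (cases "w \<in> \<Union>Cls")
        case True
        then obtain C0 where C0: "C0 \<in> Cls" "w \<in> C0" by blast
        have "(\<Sum>C\<in>Cls. c C * class_sum C w) = c C0 * class_sum C0 w + (\<Sum>C\<in>Cls - {C0}. c C * class_sum C w)"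
          by (rule sum.remove[OF finCls C0(1)])
        also have "(\<Sum>C\<in>Cls - {C0}. c C * class_sum C w) = 0"
        proof (rule sum.neutral, rule ballI)
          fix C assume CC: "C \<in> Cls - {C0}"
          hence "w \<notin> C" using Cdisj[of C C0 w] C0 by blast
          thus "c C * class_sum C w = 0" by (simp add: class_sum_def)
        qed
        also have "c C0 = z w"
        proof -
          have "(SOME y. y \<in> C0) \<in> C0" using C0(2) by (rule someI)
          thus ?thesis unfolding c_def using zC[OF C0(1) _ C0(2)] by simp
        qed
        finally show ?thesis using C0 by (simp add: class_sum_def)
      next
        case False
        have r: "(\<Sum>C\<in>Cls. c C * class_sum C w) = 0"
          using False by (intro sum.neutral) (auto simp: class_sum_def)
        have "z w = 0"
        proof (cases "w \<in> T_carrier m")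
          case False thus ?thesis using zg unfolding grp_alg_def by blast
        next
          case True
          show ?thesis
          proof (cases "snd w = 0")
            case False thus ?thesis using zoff True by blast
          next
            case s0: True
            have "w \<in> T_H m t" using True s0 unfolding H_eq carrier_iff by (cases w) auto
            hence "w = T_one" using False Cun by blast
            thus ?thesis using zone by simp
          qed
        qed
        thus ?thesis using r by simp
      qed
    qed
    thus "z \<in> ga_span Cls class_sum" unfolding ga_span_def by blast
  qed
  show ?thesis using cardCls sub sup unfolding Cls_def by blast
qed

end

theorem proposition3p12:
  fixes k :: nat and m t :: int
  assumes "CHAR('a::{field,finite}) = 3"
    and "m = 3 * int k + 1"
    and "[t ^ 3 = 1] (mod m)"
    and "gcd m (t - 1) = 1"
  defines "G \<equiv> T_carrier m" and "gmult \<equiv> T_mult m t" and "H \<equiv> T_H m t"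
  defines "Cls \<equiv> {C. \<exists>g \<in> H - {T_one}. C = conj_class G gmult g}"
  shows "card Cls = k \<and>
    ga_center G gmult (Delta G gmult T_one H :: ((int \<times> int) \<Rightarrow> 'a) set)
      = ga_span Cls class_sum"
proof -
  have m_pos: "m > 0" using assms(2) by simp
  have cop: "coprime m (t - 1)" using assms(4) by (simp add: coprime_iff_gcd_eq_1)
  interpret T3 m t using m_pos assms(3) cop by unfold_locales
  have "of_nat CHAR('a) = (0::'a)" by (rule of_nat_CHAR)
  hence c3: "(3::'a) = 0" using assms(1) by simp
  show ?thesis using main[OF assms(2) c3] unfolding Cls_def G_def gmult_def H_def .
qed

end
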